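(* Sorted and semi-sorted $n$-tape asynchronous automata over a finite alphabet $A$ accept the same class of languages: a language $L\subseteq(A^\ast)^n$ is accepted by some $n$-tape sorted asynchronous automaton if and only if it is accepted by some $n$-tape semi-sorted asynchronous automaton.
   Context: $A^\ast$ is the set of finite words over $A$, $[n]=\{1,\ldots,n\}$, $\$$ is a new symbol, $w\$$ is $w$ followed by $\$$. A shuffle of $(w_1,\ldots,w_n)$ is an ordering of all letters of the $w_i$ respecting the order within each $w_i$. A partial deterministic finite state automaton has a unique start state, no $\epsilon$-transitions and at most one outgoing transition per state and letter. An $n$-tape semi-sorted asynchronous automaton over $A$ is a partial deterministic finite state automaton over $A\sqcup\{\$\}$ with a partition of its state set into $n$ sets $S_1,\ldots,S_n$; it accepts $(w_1,\ldots,w_n)$ iff some shuffle of $(w_1\$,\ldots,w_n\$)$ is read along a path from the start state to an accept state in which each letter coming from $w_i\$$ is read while in a state of $S_i$. An $n$-tape sorted asynchronous automaton over $A$ is a partial deterministic finite state automaton over $A\sqcup\{\$\}$ with a partition of its state set into subsets $S_i^V$, for $V$ a proper subset of $[n]$ and $i\in[n]\setminus V$, and a final subset $S_f^{[n]}$, such that: the start state lies in $S_i^{\emptyset}$ for some $i$; an arrow is labelled $\$$ iff it goes from a state in some $S_i^V$ to a state in $S_j^U$ with $j\neq i$ and $U=V\cup\{i\}$ (or, when $V\cup\{i\}=[n]$, to $S_f^{[n]}$); arrows not labelled $\$$ starting in $S_i^V$ end in $S_j^V$ for some $j\notin V$; $S_f^{[n]}$ consists of exactly one state, which is the unique accept state;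 no arrows start in $S_f^{[n]}$. It accepts $(w_1,\ldots,w_n)$ iff some shuffle of $(w_1\$,\ldots,w_n\$)$ is read along a path from the start state to the accept state in which each letter coming from $w_i\$$ is read while in a state of some $S_i^V$. *)

theory Defs
  imports Main
begin

text \<open>Letters of the automaton alphabet A + {$}: Some a is the letter a, None is the
end marker $. States are natural numbers (any finite state set embeds in nat).
Tapes are indexed 0..n-1 instead of 1..n.\<close>

record 'a aut =
  states :: "nat set"
  start  :: nat
  delta  :: "nat \<Rightarrow> 'a option \<Rightarrow> nat option"
  final  :: "nat set"

definition pdfa :: "'a set \<Rightarrow> 'a aut \<Rightarrow> bool" where
  "pdfa A M \<longleftrightarrow> finite (states M) \<and> start M \<in> states M \<and> final M \<subseteq> states M
     \<and> (\<forall>q\<in>states M. \<forall>c q'. delta M q c = Some q' \<longrightarrow> q' \<in> states M)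
     \<and> (\<forall>q a. a \<notin> A \<longrightarrow> delta M q (Some a) = None)"

text \<open>acc M tp q ws: starting in state q with remaining tape contents ws (the
remaining suffixes of the words w_i$), the automaton can read a shuffle of ws and
end in an accept state, where each letter is read from tape tp q of the current
state q.\<close>
inductive acc :: "'a aut \<Rightarrow> (nat \<Rightarrow> nat) \<Rightarrow> nat \<Rightarrow> 'a option list list \<Rightarrow> bool"
  for M tp where
  acc_done: "q \<in> final M \<Longrightarrow> \<forall>w\<in>set ws. w = [] \<Longrightarrow> acc M tp q ws"
| acc_step: "tp q < length ws \<Longrightarrow> ws ! (tp q) = c # r \<Longrightarrow> delta M q c = Some q'
         \<Longrightarrow> acc M tp q' (ws[tp q := r]) \<Longrightarrow> acc M tp q ws"

definition dollar :: "'a list \<Rightarrow> 'a option list" where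
  "dollar w = map Some w @ [None]"

definition lang :: "'a set \<Rightarrow> nat \<Rightarrow> 'a aut \<Rightarrow> (nat \<Rightarrow> nat) \<Rightarrow> 'a list list set" where
  "lang A n M tp = {ws. length ws = n \<and> (\<forall>w\<in>set ws. set w \<subseteq> A)
                        \<and> acc M tp (start M) (map dollar ws)}"

text \<open>Semi-sorted: partition of states into S_1..S_n given by tp (q \<in> S_(tp q)).\<close>
definition semi_sorted :: "'a set \<Rightarrow> nat \<Rightarrow> 'a aut \<Rightarrow> (nat \<Rightarrow> nat) \<Rightarrow> bool" where
  "semi_sorted A n M tp \<longleftrightarrow> pdfa A M \<and> (\<forall>q\<in>states M. tp q < n)"

text \<open>Sorted: lab q = Some (i, V) means q \<in> S_i^V; lab q = None means q \<in> S_f^[n].\<close>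
definition sorted_aut :: "'a set \<Rightarrow> nat \<Rightarrow> 'a aut \<Rightarrow> (nat \<Rightarrow> (nat \<times> nat set) option) \<Rightarrow> bool" where
  "sorted_aut A n M lab \<longleftrightarrow> pdfa A M
     \<and> (\<forall>q\<in>states M. lab q = None \<or>
          (\<exists>i V. lab q = Some (i, V) \<and> V \<subset> {..<n} \<and> i < n \<and> i \<notin> V))
     \<and> (\<exists>i. lab (start M) = Some (i, {}))
     \<and> (\<exists>qf\<in>states M. final M = {qf} \<and> (\<forall>q\<in>states M. lab q = None \<longleftrightarrow> q = qf)
          \<and> (\<forall>c. delta M qf c = None))
     \<and> (\<forall>q\<in>states M. \<forall>i V. lab q = Some (i, V) \<longrightarrow>
          (\<forall>q'. delta M q None = Some q' \<longrightarrow>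
             (\<exists>j. j \<noteq> i \<and> lab q' = Some (j, insert i V))
             \<or> (insert i V = {..<n} \<and> lab q' = None))
        \<and> (\<forall>a q'. delta M q (Some a) = Some q' \<longrightarrow> (\<exists>j. j \<notin> V \<and> lab q' = Some (j, V))))"

definition sorted_tape :: "(nat \<Rightarrow> (nat \<times> nat set) option) \<Rightarrow> nat \<Rightarrow> nat" where
  "sorted_tape lab q = (case lab q of Some (i, V) \<Rightarrow> i | None \<Rightarrow> 0)"

end

theory Submission
  imports Defs "HOL-Library.Nat_Bijection"
begin

definition enc :: "nat \<Rightarrow> nat set \<Rightarrow> nat" where
  "enc q V = Suc (prod_encode (q, set_encode V))"

definition stp :: "'a aut \<Rightarrow> (nat \<Rightarrow> nat) \<Rightarrow> nat \<Rightarrow> nat \<Rightarrow> nat set \<Rightarrow> 'a option \<Rightarrow> nat option" where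
  "stp M tp n q V c = (if q \<in> states M \<and> tp q \<notin> V then
      (case delta M q c of None \<Rightarrow> None | Some q' \<Rightarrow>
        (let V' = (if c = None then insert (tp q) V else V) in
         if V' = {..<n} then (if q' \<in> final M then Some 0 else None)
         else if tp q' \<in> V' then None else Some (enc q' V')))
     else None)"

definition ndelta :: "'a aut \<Rightarrow> (nat \<Rightarrow> nat) \<Rightarrow> nat \<Rightarrow> nat \<Rightarrow> 'a option \<Rightarrow> nat option" where
  "ndelta M tp n k c = (case k of 0 \<Rightarrow> None
     | Suc m \<Rightarrow> stp M tp n (fst (prod_decode m)) (set_decode (snd (prod_decode m))) c)"

definition nlab :: "(nat \<Rightarrow> nat) \<Rightarrow> nat \<Rightarrow> (nat \<times> nat set) option" where
  "nlab tp k = (case k of 0 \<Rightarrow> None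
     | Suc m \<Rightarrow> Some (tp (fst (prod_decode m)), set_decode (snd (prod_decode m))))"

definition nM :: "'a aut \<Rightarrow> (nat \<Rightarrow> nat) \<Rightarrow> nat \<Rightarrow> 'a aut" where
  "nM M tp n = \<lparr>states = insert 0 ((\<lambda>(q,V). enc q V) ` {(q,V). q \<in> states M \<and> V \<subseteq> {..<n} \<and> tp q \<notin> V}),
     start = enc (start M) {}, delta = ndelta M tp n, final = {0}\<rparr>"

lemma ndelta_enc: "finite V \<Longrightarrow> ndelta M tp n (enc q V) c = stp M tp n q V c"
  by (simp add: ndelta_def enc_def)

lemma nlab_enc: "finite V \<Longrightarrow> nlab tp (enc q V) = Some (tp q, V)"
  by (simp add: nlab_def enc_def)

lemma enc_ne0[simp]: "enc q V \<noteq> 0" by (simp add: enc_def)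

definition good :: "'a option list list \<Rightarrow> bool" where
  "good ws \<longleftrightarrow> (\<forall>w\<in>set ws. w = [] \<or> (\<exists>u. w = map Some u @ [None]))"

definition E :: "'a option list list \<Rightarrow> nat set" where
  "E ws = {i. i < length ws \<and> ws ! i = []}"

lemma good_step:
  assumes "good ws" "j < length ws" "ws ! j = c # r"
  shows "(c = None \<longleftrightarrow> r = []) \<and> good (ws[j := r])
    \<and> E (ws[j:=r]) = (if c = None then insert j (E ws) else E ws)"
proof -
  from assms(2) have "ws ! j \<in> set ws" by (rule nth_mem)
  with assms(1) have "ws ! j = [] \<or> (\<exists>u. ws ! j = map Some u @ [None])" unfolding good_def by blast
  with assms(3) obtain u where u: "c # r = map Some u @ [None]" by auto
  have 1: "c = None \<longleftrightarrow> r = []" 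
  proof (cases u)
    case Nil then show ?thesis using u by simp
  next
    case (Cons x xs) then show ?thesis using u by simp
  qed
  have h1b: "r = [] \<or> (\<exists>u. r = map Some u @ [None])"
  proof (cases u)
    case Nil then show ?thesis using u by simp
  next
    case (Cons x xs) then show ?thesis using u by auto
  qed
  have 2: "good (ws[j:=r])" unfolding good_def
  proof
    fix w assume "w \<in> set (ws[j:=r])"
    then have "w \<in> insert r (set ws)" using set_update_subset_insert by fast
    then show "w = [] \<or> (\<exists>u. w = map Some u @ [None])" using h1b assms(1) unfolding good_def by blast
  qed
  have 3: "E (ws[j:=r]) = (if c = None then insert j (E ws) else E ws)"
    using 1 assms(2,3) unfolding E_def by (auto simp: nth_list_update)
  show ?thesis using 1 2 3 by blast
qed

lemma acc_all_empty:
  assumes "acc M tp q ws" "\<forall>w\<in>set ws. w = []"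
  shows "q \<in> final M"
  using assms(1)
proof (cases rule: acc.cases)
  case (acc_step c r q')
  then have "ws ! tp q \<in> set ws" by (metis nth_mem)
  with assms(2) acc_step(2) have "c # r = []" by auto
  then show ?thesis by simp
qed simp

lemma acc_tp_nonempty:
  assumes "acc M tp q ws" "tp q < length ws" "ws ! tp q = []"
  shows "\<forall>w\<in>set ws. w = []"
  using assms(1)
proof (cases rule: acc.cases)
  case (acc_step c r q')
  with assms(3) show ?thesis by simp
qed simp

lemma stp_SomeD:
  assumes "stp M tp n q V c = Some k'"
  obtains q' where "q \<in> states M" "tp q \<notin> V" "delta M q c = Some q'"
    "(if c = None then insert (tp q) V else V) = {..<n} \<Longrightarrow> q' \<in> final M \<and> k' = 0"
    "(if c = None then insert (tp q) V else V) \<noteq> {..<n} \<Longrightarrow> tp q' \<notin> (if c = None then insert (tp q) V else V) \<and> k' = enc q' (if c = None then insert (tp q) V else V)"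
  using assms unfolding stp_def Let_def
  by (auto split: if_splits option.splits)

lemma acc_back:
  assumes "acc (nM M tp n) (sorted_tape (nlab tp)) k ws"
  shows "\<And>q V. k = enc q V \<Longrightarrow> finite V \<Longrightarrow> good ws \<Longrightarrow> length ws = n \<Longrightarrow> V = E ws \<Longrightarrow> acc M tp q ws"
  using assms
proof induction
  case (acc_done k ws)
  then show ?case by (simp add: nM_def)
next
  case (acc_step k ws c r k')
  have tpk: "sorted_tape (nlab tp) k = tp q" using acc_step.prems(1,2) by (simp add: sorted_tape_def nlab_enc)
  have "stp M tp n q V c = Some k'" using acc_step.hyps(3) acc_step.prems(1,2) by (simp add: nM_def ndelta_enc)
  then obtain q' where q: "q \<in> states M" "tp q \<notin> V" "delta M q c = Some q'"
    and A: "(if c = None then insert (tp q) V else V) = {..<n} \<Longrightarrow> q' \<in> final M \<and> k' = 0"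
    and B: "(if c = None then insert (tp q) V else V) \<noteq> {..<n} \<Longrightarrow> tp q' \<notin> (if c = None then insert (tp q) V else V) \<and> k' = enc q' (if c = None then insert (tp q) V else V)"
    by (rule stp_SomeD) blast
  have lt: "tp q < length ws" and nth: "ws ! tp q = c # r" using acc_step.hyps(1,2) tpk by auto
  from good_step[OF acc_step.prems(3) lt nth]
  have g: "(c = None \<longleftrightarrow> r = [])" "good (ws[tp q := r])"
     "E (ws[tp q:=r]) = (if c = None then insert (tp q) V else V)" using acc_step.prems(5) by auto
  show ?case
  proof (cases "(if c = None then insert (tp q) V else V) = {..<n}")
    case True
    with A have f: "q' \<in> final M" by auto
    have "\<forall>w\<in>set (ws[tp q := r]). w = []"
    proof
      fix w assume "w \<in> set (ws[tp q := r])"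
      then obtain i where i: "i < length (ws[tp q := r])" "w = ws[tp q := r] ! i" by (metis in_set_conv_nth)
      then have "i \<in> E (ws[tp q:=r])" using True g(3) acc_step.prems(4) by simp
      then show "w = []" using i unfolding E_def by simp
    qed
    then have "acc M tp q' (ws[tp q := r])" using f by (intro acc.acc_done)
    then show ?thesis using lt nth q(3) by (rule acc.acc_step[rotated 3])
  next
    case False
    with B have k': "k' = enc q' (if c = None then insert (tp q) V else V)" by auto
    have "acc M tp q' (ws[tp q := r])"
      using acc_step.IH[OF k'] acc_step.prems(2,4) g tpk by simp
    then show ?thesis using lt nth q(3) by (rule acc.acc_step[rotated 3])
  qed
qed

lemma E_full: "length ws = n \<Longrightarrow> (E ws = {..<n}) = (\<forall>w\<in>set ws. w = [])"
proof
  assume l: "length ws = n" and e: "E ws = {..<n}"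
  show "\<forall>w\<in>set ws. w = []"
  proof
    fix w assume "w \<in> set ws"
    then obtain i where "i < length ws" "w = ws ! i" by (metis in_set_conv_nth)
    then show "w = []" using e l unfolding E_def by blast
  qed
next
  assume l: "length ws = n" and e: "\<forall>w\<in>set ws. w = []"
  have "ws ! i = []" if "i < length ws" for i using e nth_mem[OF that] by blast
  then show "E ws = {..<n}" using l unfolding E_def by auto
qed

lemma E_finite: "finite (E ws)"
  unfolding E_def by simp

lemma acc_fwd:
  assumes "acc M tp q ws"
  shows "good ws \<Longrightarrow> length ws = n \<Longrightarrow> q \<in> states M \<Longrightarrow> semi_sorted A n M tp \<Longrightarrow> tp q \<notin> E ws
     \<Longrightarrow> acc (nM M tp n) (sorted_tape (nlab tp)) (enc q (E ws)) ws"
  using assms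
proof induction
  case (acc_done q ws)
  then have "E ws = {..<n}" using E_full by blast
  moreover have "tp q < n" using acc_done.prems(3,4) unfolding semi_sorted_def by blast
  ultimately show ?case using acc_done.prems(5) by blast
next
  case (acc_step q ws c r q')
  let ?V' = "if c = None then insert (tp q) (E ws) else E ws"
  have tpk: "sorted_tape (nlab tp) (enc q (E ws)) = tp q" by (simp add: sorted_tape_def nlab_enc E_finite)
  have pd: "pdfa A M" and tpn: "\<forall>q\<in>states M. tp q < n" using acc_step.prems(4) unfolding semi_sorted_def by auto
  have q'S: "q' \<in> states M" using pd acc_step.prems(3) acc_step.hyps(3) unfolding pdfa_def by blast
  from good_step[OF acc_step.prems(1) acc_step.hyps(1,2)]
  have g: "(c = None \<longleftrightarrow> r = [])" "good (ws[tp q := r])"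
     "E (ws[tp q:=r]) = ?V'" by auto
  have len: "length (ws[tp q := r]) = n" using acc_step.prems(2) by simp
  show ?case
  proof (cases "?V' = {..<n}")
    case True
    then have emp: "\<forall>w\<in>set (ws[tp q := r]). w = []" using E_full[OF len] g(3) by simp
    then have f: "q' \<in> final M" using acc_step.hyps(4) acc_all_empty by blast
    have st: "stp M tp n q (E ws) c = Some 0"
      using True f acc_step.prems(3,5) acc_step.hyps(3) unfolding stp_def Let_def by simp
    have a0: "acc (nM M tp n) (sorted_tape (nlab tp)) 0 (ws[tp q := r])"
      using emp by (intro acc.acc_done) (simp_all add: nM_def)
    have d0: "delta (nM M tp n) (enc q (E ws)) c = Some 0"
      using st by (simp add: nM_def ndelta_enc E_finite)
    show ?thesis
      by (rule acc.acc_step[where c=c and r=r and q'=0]) (use a0 d0 acc_step.hyps(1,2) tpk in simp_all)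
  next
    case False
    have ntp: "tp q' \<notin> ?V'"
    proof
      assume "tp q' \<in> ?V'"
      then have "tp q' < length (ws[tp q := r])" "(ws[tp q := r]) ! tp q' = []"
        using g(3) unfolding E_def by auto
      then have "\<forall>w\<in>set (ws[tp q := r]). w = []" using acc_step.hyps(4) acc_tp_nonempty by blast
      then show False using False E_full[OF len] g(3) by simp
    qed
    have st: "stp M tp n q (E ws) c = Some (enc q' ?V')"
      using False ntp acc_step.prems(3,5) acc_step.hyps(3) unfolding stp_def Let_def by simp
    have a1: "acc (nM M tp n) (sorted_tape (nlab tp)) (enc q' (E (ws[tp q := r]))) (ws[tp q := r])"
      using acc_step.IH g(2) len q'S acc_step.prems(4) ntp g(3) by simp
    have d1: "delta (nM M tp n) (enc q (E ws)) c = Some (enc q' ?V')"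
      using st by (simp add: nM_def ndelta_enc E_finite)
    show ?thesis
      by (rule acc.acc_step[where c=c and r=r and q'="enc q' ?V'"]) (use a1 d1 acc_step.hyps(1,2) tpk g(3) in simp_all)
  qed
qed

lemma nM_states: "states (nM M tp n) = insert 0 ((\<lambda>(q,V). enc q V) ` {(q,V). q \<in> states M \<and> V \<subseteq> {..<n} \<and> tp q \<notin> V})"
  by (simp add: nM_def)

lemma enc_mem: "q \<in> states M \<Longrightarrow> V \<subseteq> {..<n} \<Longrightarrow> tp q \<notin> V \<Longrightarrow> enc q V \<in> states (nM M tp n)"
  unfolding nM_states by (rule insertI2, rule image_eqI[where x="(q,V)"]) auto

lemma memD: "k \<in> states (nM M tp n) \<Longrightarrow> k = 0 \<or> (\<exists>q V. k = enc q V \<and> q \<in> states M \<and> V \<subseteq> {..<n} \<and> tp q \<notin> V)"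
  unfolding nM_states by auto

lemma nM_sorted:
  assumes ss: "semi_sorted A n M tp"
  shows "sorted_aut A n (nM M tp n) (nlab tp)"
proof -
  let ?S = "{(q,V). q \<in> states M \<and> V \<subseteq> {..<n} \<and> tp q \<notin> V}"
  have pd: "pdfa A M" and tpn: "\<forall>q\<in>states M. tp q < n" using ss unfolding semi_sorted_def by auto
  have finM: "finite (states M)" and stM: "start M \<in> states M"
    and clM: "\<forall>q\<in>states M. \<forall>c q'. delta M q c = Some q' \<longrightarrow> q' \<in> states M"
    and nA: "\<forall>q a. a \<notin> A \<longrightarrow> delta M q (Some a) = None"
    using pd unfolding pdfa_def by auto
  have finS: "finite ?S"
    by (rule finite_subset[of _ "states M \<times> Pow {..<n}"]) (use finM in auto)
  have trans: "delta (nM M tp n) (enc q V) c = Some k' \<Longrightarrow> q \<in> states M \<Longrightarrow> V \<subseteq> {..<n} \<Longrightarrow> tp q \<notin> V \<Longrightarrow>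
      (\<exists>q'. q' \<in> states M \<and> (let V' = (if c = None then insert (tp q) V else V) in
          (V' = {..<n} \<and> k' = 0) \<or> (V' \<noteq> {..<n} \<and> tp q' \<notin> V' \<and> k' = enc q' V')))" for q V c k'
  proof -
    assume h: "delta (nM M tp n) (enc q V) c = Some k'" "q \<in> states M" "V \<subseteq> {..<n}" "tp q \<notin> V"
    have fV: "finite V" using h(3) finite_subset by blast
    have "stp M tp n q V c = Some k'" using h(1) fV by (simp add: nM_def ndelta_enc)
    then obtain q' where q': "q \<in> states M" "tp q \<notin> V" "delta M q c = Some q'"
      and A: "(if c = None then insert (tp q) V else V) = {..<n} \<Longrightarrow> q' \<in> final M \<and> k' = 0"
      and B: "(if c = None then insert (tp q) V else V) \<noteq> {..<n} \<Longrightarrow> tp q' \<notin> (if c = None then insert (tp q) V else V) \<and> k' = enc q' (if c = None then insert (tp q) V else V)"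
      by (rule stp_SomeD) blast
    have "q' \<in> states M" using clM q'(1,3) by blast
    then show ?thesis using A B unfolding Let_def by blast
  qed
  have p1: "pdfa A (nM M tp n)"
    unfolding pdfa_def
  proof (intro conjI allI ballI impI)
    show "finite (states (nM M tp n))" using finS by (simp add: nM_states)
    show "start (nM M tp n) \<in> states (nM M tp n)" using enc_mem[OF stM, of "{}" n tp] by (simp add: nM_def)
    show "final (nM M tp n) \<subseteq> states (nM M tp n)" by (simp add: nM_def)
  next
    fix k c k' assume k: "k \<in> states (nM M tp n)" and d: "delta (nM M tp n) k c = Some k'"
    show "k' \<in> states (nM M tp n)"
    proof (cases "k = 0")
      case True then show ?thesis using d by (simp add: nM_def ndelta_def)
    next
      case False
      then obtain q V where kq: "k = enc q V" "q \<in> states M" "V \<subseteq> {..<n}" "tp q \<notin> V" using memD[OF k] by blast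
      from trans[OF d[unfolded kq(1)] kq(2-4)] obtain q' where q'S: "q' \<in> states M" and
        r: "let V' = (if c = None then insert (tp q) V else V) in
          (V' = {..<n} \<and> k' = 0) \<or> (V' \<noteq> {..<n} \<and> tp q' \<notin> V' \<and> k' = enc q' V')" by blast
      have sub: "(if c = None then insert (tp q) V else V) \<subseteq> {..<n}" using kq tpn by auto
      show ?thesis
      proof (cases "(if c = None then insert (tp q) V else V) = {..<n}")
        case True
        then have "k' = 0" using r by (simp add: Let_def)
        then show ?thesis by (simp add: nM_states)
      next
        case False
        then have "tp q' \<notin> (if c = None then insert (tp q) V else V)" "k' = enc q' (if c = None then insert (tp q) V else V)"
          using r by (simp_all add: Let_def)
        then show ?thesis using enc_mem[OF q'S sub] by simp
      qed
    qed
  next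
    fix k a assume "a \<notin> A"
    then show "delta (nM M tp n) k (Some a) = None" using nA
      by (simp add: nM_def ndelta_def stp_def split: nat.splits)
  qed
  have labS: "nlab tp (enc q V) = Some (tp q, V)" if "V \<subseteq> {..<n}" for q V
    using finite_subset[OF that finite_lessThan] by (simp add: nlab_enc)
  have p2: "\<forall>k\<in>states (nM M tp n). nlab tp k = None \<or>
          (\<exists>i V. nlab tp k = Some (i, V) \<and> V \<subset> {..<n} \<and> i < n \<and> i \<notin> V)"
  proof
    fix k assume "k \<in> states (nM M tp n)"
    then have "k = 0 \<or> (\<exists>q V. k = enc q V \<and> q \<in> states M \<and> V \<subseteq> {..<n} \<and> tp q \<notin> V)" by (rule memD)
    then show "nlab tp k = None \<or> (\<exists>i V. nlab tp k = Some (i, V) \<and> V \<subset> {..<n} \<and> i < n \<and> i \<notin> V)"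
    proof
      assume "k = 0" then show ?thesis by (simp add: nlab_def)
    next
      assume "\<exists>q V. k = enc q V \<and> q \<in> states M \<and> V \<subseteq> {..<n} \<and> tp q \<notin> V"
      then obtain q V where h: "k = enc q V" "q \<in> states M" "V \<subseteq> {..<n}" "tp q \<notin> V" by blast
      have "tp q < n" using tpn h(2) by blast
      then have "V \<subset> {..<n}" using h(3,4) by blast
      then show ?thesis using labS[OF h(3)] h(1,4) \<open>tp q < n\<close> by simp
    qed
  qed
  have p3: "\<exists>i. nlab tp (start (nM M tp n)) = Some (i, {})"
    by (simp add: nM_def labS)
  have p4: "\<exists>qf\<in>states (nM M tp n). final (nM M tp n) = {qf} \<and> (\<forall>q\<in>states (nM M tp n). nlab tp q = None \<longleftrightarrow> q = qf)
          \<and> (\<forall>c. delta (nM M tp n) qf c = None)"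
  proof (rule bexI[of _ 0])
    have "nlab tp q = None \<longleftrightarrow> q = 0" for q by (simp add: nlab_def split: nat.split)
    moreover have "final (nM M tp n) = {0}" "delta (nM M tp n) 0 c = None" for c
      by (simp_all add: nM_def ndelta_def)
    ultimately show "final (nM M tp n) = {0} \<and> (\<forall>q\<in>states (nM M tp n). nlab tp q = None \<longleftrightarrow> q = 0)
          \<and> (\<forall>c. delta (nM M tp n) 0 c = None)" by simp
    show "0 \<in> states (nM M tp n)" by (simp add: nM_states)
  qed
  have p5: "\<forall>k\<in>states (nM M tp n). \<forall>i V. nlab tp k = Some (i, V) \<longrightarrow>
          (\<forall>k'. delta (nM M tp n) k None = Some k' \<longrightarrow>
             (\<exists>j. j \<noteq> i \<and> nlab tp k' = Some (j, insert i V))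
             \<or> (insert i V = {..<n} \<and> nlab tp k' = None))
        \<and> (\<forall>a k'. delta (nM M tp n) k (Some a) = Some k' \<longrightarrow> (\<exists>j. j \<notin> V \<and> nlab tp k' = Some (j, V)))"
  proof (intro ballI allI impI conjI)
    fix k i W assume k: "k \<in> states (nM M tp n)" and l: "nlab tp k = Some (i, W)"
    have "k \<noteq> 0" using l by (cases k) (simp_all add: nlab_def)
    then obtain q V where h: "k = enc q V" "q \<in> states M" "V \<subseteq> {..<n}" "tp q \<notin> V" using memD[OF k] by blast
    have iW: "i = tp q" "W = V" using l h labS by auto
    have tq: "tp q < n" using tpn h(2) by blast
    {
      fix k' assume d: "delta (nM M tp n) k None = Some k'"
      from trans[OF d[unfolded h(1)] h(2-4)] obtain q' where q'S: "q' \<in> states M" and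
        r: "(insert (tp q) V = {..<n} \<and> k' = 0) \<or> (insert (tp q) V \<noteq> {..<n} \<and> tp q' \<notin> insert (tp q) V \<and> k' = enc q' (insert (tp q) V))"
        by (auto simp: Let_def)
      have sub: "insert (tp q) V \<subseteq> {..<n}" using h(3) tq by auto
      show "(\<exists>j. j \<noteq> i \<and> nlab tp k' = Some (j, insert i W)) \<or> (insert i W = {..<n} \<and> nlab tp k' = None)"
        using r labS[OF sub] iW by (auto simp: nlab_def)
    }
    {
      fix a k' assume d: "delta (nM M tp n) k (Some a) = Some k'"
      from trans[OF d[unfolded h(1)] h(2-4)] obtain q' where q'S: "q' \<in> states M" and
        r: "(V = {..<n} \<and> k' = 0) \<or> (V \<noteq> {..<n} \<and> tp q' \<notin> V \<and> k' = enc q' V)"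
        by (auto simp: Let_def)
      have "V \<noteq> {..<n}" using tq h(4) by blast
      then show "\<exists>j. j \<notin> W \<and> nlab tp k' = Some (j, W)"
        using r labS[OF h(3)] iW by auto
    }
  qed
  show ?thesis unfolding sorted_aut_def by (rule conjI p1 p2 p3 p4 p5)+
qed

lemma good_dollar: "good (map dollar ws)"
  unfolding good_def dollar_def by auto

lemma E_dollar: "E (map dollar ws) = {}"
  unfolding E_def dollar_def by auto

lemma lang_eq:
  assumes ss: "semi_sorted A n M tp"
  shows "lang A n (nM M tp n) (sorted_tape (nlab tp)) = lang A n M tp"
proof -
  have stM: "start M \<in> states M" using ss unfolding semi_sorted_def pdfa_def by blast
  have st: "start (nM M tp n) = enc (start M) (E (map dollar ws))" for ws :: "'a list list"
    by (simp add: nM_def E_dollar)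
  show ?thesis
  proof (rule set_eqI, rule iffI)
    fix ws assume "ws \<in> lang A n (nM M tp n) (sorted_tape (nlab tp))"
    then have h: "length ws = n" "\<forall>w\<in>set ws. set w \<subseteq> A"
      "acc (nM M tp n) (sorted_tape (nlab tp)) (enc (start M) {}) (map dollar ws)"
      unfolding lang_def by (auto simp: nM_def)
    have "acc M tp (start M) (map dollar ws)"
      using acc_back[OF h(3) refl] good_dollar[of ws] E_dollar[of ws] h(1) by simp
    then show "ws \<in> lang A n M tp" using h unfolding lang_def by simp
  next
    fix ws assume "ws \<in> lang A n M tp"
    then have h: "length ws = n" "\<forall>w\<in>set ws. set w \<subseteq> A"
      "acc M tp (start M) (map dollar ws)" unfolding lang_def by auto
    have "acc (nM M tp n) (sorted_tape (nlab tp)) (enc (start M) (E (map dollar ws))) (map dollar ws)"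
      using acc_fwd[OF h(3)] good_dollar[of ws] E_dollar[of ws] h(1) stM ss by simp
    then show "ws \<in> lang A n (nM M tp n) (sorted_tape (nlab tp))"
      using h st[of ws] unfolding lang_def by simp
  qed
qed

lemma sorted_semi:
  assumes "sorted_aut A n M lab"
  shows "semi_sorted A n M (sorted_tape lab)"
proof -
  have pd: "pdfa A M" and p2: "\<forall>q\<in>states M. lab q = None \<or>
          (\<exists>i V. lab q = Some (i, V) \<and> V \<subset> {..<n} \<and> i < n \<and> i \<notin> V)"
    and p3: "\<exists>i. lab (start M) = Some (i, {})" using assms unfolding sorted_aut_def by blast+
  have stM: "start M \<in> states M" using pd unfolding pdfa_def by blast
  obtain i where i: "lab (start M) = Some (i, {})" using p3 by blast
  have "i < n" using p2 stM i by auto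
  then have n0: "0 < n" by simp
  have "sorted_tape lab q < n" if "q \<in> states M" for q
    using p2 that n0 unfolding sorted_tape_def by (auto split: option.splits)
  then show ?thesis using pd unfolding semi_sorted_def by blast
qed

theorem mainTheorem6:
  fixes A :: "'a set" and n :: nat and L :: "'a list list set"
  assumes "finite A"
  shows "(\<exists>M lab. sorted_aut A n M lab \<and> L = lang A n M (sorted_tape lab))
     \<longleftrightarrow> (\<exists>M tp. semi_sorted A n M tp \<and> L = lang A n M tp)"
proof
  assume "\<exists>M lab. sorted_aut A n M lab \<and> L = lang A n M (sorted_tape lab)"
  then obtain M lab where "sorted_aut A n M lab" "L = lang A n M (sorted_tape lab)" by blast
  then show "\<exists>M tp. semi_sorted A n M tp \<and> L = lang A n M tp" using sorted_semi by blast
next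
  assume "\<exists>M tp. semi_sorted A n M tp \<and> L = lang A n M tp"
  then obtain M tp where h: "semi_sorted A n M tp" "L = lang A n M tp" by blast
  show "\<exists>M lab. sorted_aut A n M lab \<and> L = lang A n M (sorted_tape lab)"
    using nM_sorted[OF h(1)] lang_eq[OF h(1)] h(2) by metis
qed

end
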